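(* Let $X_0,X_1,\ldots$ be an irreducible and aperiodic discrete-time Markov chain on a finite state space $\Omega$ with stationary distribution $\pi$. Let $x\in\Omega$ be a state and $\mathcal C\subset\Omega$ a subset such that, for an initial state $x_0\in\Omega$, $$P\{\tau_x<\tau_{\mathcal C}\mid X_0=x_0\}\ge c$$ for some constant $c$. Let $\mathcal B\subset\Omega$ be a subset such that every path from $x$ to $\mathcal C$ intersects $\mathcal B$. Then $$E\{\tau_{\mathcal C}\mid X_0=x_0\}\ge\frac{c\,\pi(x)}{\pi(\mathcal B)}.$$
   Context: For $A\subset\Omega$ (or a single state), $\tau_A=\min\{t\ge0:X_t\in A\}$. A path is a sequence of states in which each consecutive pair has positive transition probability. $\pi(\mathcal B)=\sum_{y\in\mathcal B}\pi(y)$. *)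

theory Defs
  imports "HOL-Probability.Probability"
begin

text \<open>Finite state space: the finite type 'a (Omega = UNIV). Transition matrix P.\<close>

definition stochastic :: "('a::finite \<Rightarrow> 'a \<Rightarrow> real) \<Rightarrow> bool" where
  "stochastic P \<longleftrightarrow> (\<forall>y z. 0 \<le> P y z) \<and> (\<forall>y. (\<Sum>z\<in>UNIV. P y z) = 1)"

fun mpow :: "('a::finite \<Rightarrow> 'a \<Rightarrow> real) \<Rightarrow> nat \<Rightarrow> 'a \<Rightarrow> 'a \<Rightarrow> real" where
  "mpow P 0 y z = (if y = z then 1 else 0)"
| "mpow P (Suc n) y z = (\<Sum>w\<in>UNIV. mpow P n y w * P w z)"

definition irreducible_chain :: "('a::finite \<Rightarrow> 'a \<Rightarrow> real) \<Rightarrow> bool" where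
  "irreducible_chain P \<longleftrightarrow> (\<forall>y z. \<exists>n. 0 < mpow P n y z)"

definition aperiodic_chain :: "('a::finite \<Rightarrow> 'a \<Rightarrow> real) \<Rightarrow> bool" where
  "aperiodic_chain P \<longleftrightarrow> (\<forall>y. Gcd {n. 0 < n \<and> 0 < mpow P n y y} = 1)"

definition stationary_dist :: "('a::finite \<Rightarrow> 'a \<Rightarrow> real) \<Rightarrow> ('a \<Rightarrow> real) \<Rightarrow> bool" where
  "stationary_dist P \<pi> \<longleftrightarrow> (\<forall>y. 0 \<le> \<pi> y) \<and> (\<Sum>y\<in>UNIV. \<pi> y) = 1
     \<and> (\<forall>z. (\<Sum>y\<in>UNIV. \<pi> y * P y z) = \<pi> z)"

definition markov_chain :: "'w measure \<Rightarrow> (nat \<Rightarrow> 'w \<Rightarrow> 'a::finite) \<Rightarrow> ('a \<Rightarrow> 'a \<Rightarrow> real) \<Rightarrow> bool" where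
  "markov_chain M X P \<longleftrightarrow> prob_space M \<and> (\<forall>n. X n \<in> measurable M (count_space UNIV)) \<and>
     (\<forall>n a. measure M {\<omega>\<in>space M. \<forall>i\<le>n. X i \<omega> = a i}
            = measure M {\<omega>\<in>space M. X 0 \<omega> = a 0} * (\<Prod>i<n. P (a i) (a (Suc i))))"

definition hit :: "(nat \<Rightarrow> 'w \<Rightarrow> 'a) \<Rightarrow> 'a set \<Rightarrow> 'w \<Rightarrow> enat" where
  "hit X A \<omega> = (if \<exists>t. X t \<omega> \<in> A then enat (LEAST t. X t \<omega> \<in> A) else \<infinity>)"

definition cond_prob_start :: "'w measure \<Rightarrow> (nat \<Rightarrow> 'w \<Rightarrow> 'a) \<Rightarrow> 'a \<Rightarrow> 'w set \<Rightarrow> real" where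
  "cond_prob_start M X x0 E = measure M (E \<inter> {\<omega>\<in>space M. X 0 \<omega> = x0}) / measure M {\<omega>\<in>space M. X 0 \<omega> = x0}"

definition cond_exp_start :: "'w measure \<Rightarrow> (nat \<Rightarrow> 'w \<Rightarrow> 'a) \<Rightarrow> 'a \<Rightarrow> ('w \<Rightarrow> ennreal) \<Rightarrow> ennreal" where
  "cond_exp_start M X x0 f = (\<integral>\<^sup>+\<omega>. f \<omega> * indicator {\<omega>\<in>space M. X 0 \<omega> = x0} \<omega> \<partial>M)
      / emeasure M {\<omega>\<in>space M. X 0 \<omega> = x0}"

definition is_path :: "('a \<Rightarrow> 'a \<Rightarrow> real) \<Rightarrow> 'a list \<Rightarrow> bool" where
  "is_path P xs \<longleftrightarrow> xs \<noteq> [] \<and> (\<forall>i. Suc i < length xs \<longrightarrow> 0 < P (xs ! i) (xs ! Suc i))"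

end

theory Submission
  imports Defs
begin

fun wt :: "('a \<Rightarrow> 'a \<Rightarrow> real) \<Rightarrow> 'a list \<Rightarrow> real" where
  "wt P [] = 1"
| "wt P [y] = 1"
| "wt P (y # z # ys) = P y z * wt P (z # ys)"

definition Ls :: "nat \<Rightarrow> 'a \<Rightarrow> 'a list set" where
  "Ls n y = {xs. length xs = Suc n \<and> hd xs = y}"

fun goodl :: "'a set \<Rightarrow> 'a \<Rightarrow> 'a list \<Rightarrow> bool" where
  "goodl C x [] = False"
| "goodl C x (y # ys) = (y \<notin> C \<and> (y = x \<or> goodl C x ys))"

lemma wt_prod: "wt P xs = (\<Prod>i<length xs - 1. P (xs ! i) (xs ! Suc i))"
  by (induction P xs rule: wt.induct) (simp_all add: prod.lessThan_Suc_shift del: prod.lessThan_Suc)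

lemma finite_Ls: "finite (Ls n (y::'a::finite))"
proof -
  have "Ls n y \<subseteq> {xs. set xs \<subseteq> UNIV \<and> length xs = Suc n}" by (auto simp: Ls_def)
  then show ?thesis using finite_lists_length_eq[of "UNIV::'a set"] by (auto intro: finite_subset)
qed

lemma Ls_0: "Ls 0 y = {[y]}"
  by (auto simp: Ls_def length_Suc_conv)

lemma Ls_Suc: "Ls (Suc n) y = (\<lambda>ys. y # ys) ` (\<Union>z. Ls n z)"
  by (auto simp: Ls_def length_Suc_conv image_iff)

lemma sum_Ls_Suc:
  fixes f :: "'a::finite list \<Rightarrow> real"
  shows "(\<Sum>xs\<in>Ls (Suc n) y. f xs) = (\<Sum>z\<in>UNIV. \<Sum>ys\<in>Ls n z. f (y # ys))"
proof -
  have "(\<Sum>xs\<in>Ls (Suc n) y. f xs) = (\<Sum>ys\<in>(\<Union>z. Ls n z). f (y # ys))"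
    unfolding Ls_Suc by (subst sum.reindex) (auto simp: inj_on_def)
  also have "\<dots> = (\<Sum>z\<in>UNIV. \<Sum>ys\<in>Ls n z. f (y # ys))"
    by (subst sum.UNION_disjoint) (auto simp: finite_Ls, auto simp: Ls_def)
  finally show ?thesis .
qed

lemma Ls_hd: "ys \<in> Ls n z \<Longrightarrow> ys = z # tl ys"
  by (cases ys) (auto simp: Ls_def)

lemma wt_Cons_Ls: "ys \<in> Ls n z \<Longrightarrow> wt P (y # ys) = P y z * wt P ys"
  by (metis Ls_hd wt.simps(3))

lemma sum_wt:
  assumes "stochastic P"
  shows "(\<Sum>xs\<in>Ls n (y::'a::finite). wt P xs) = 1"
proof (induction n arbitrary: y)
  case 0 then show ?case by (simp add: Ls_0)
next
  case (Suc n)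
  have "(\<Sum>xs\<in>Ls (Suc n) y. wt P xs) = (\<Sum>z\<in>UNIV. \<Sum>ys\<in>Ls n z. P y z * wt P ys)"
    unfolding sum_Ls_Suc by (intro sum.cong refl) (simp add: wt_Cons_Ls)
  also have "\<dots> = (\<Sum>z\<in>UNIV. P y z)" by (simp add: sum_distrib_left[symmetric] Suc)
  finally show ?case using assms by (simp add: stochastic_def)
qed

fun hb :: "('a::finite \<Rightarrow> 'a \<Rightarrow> real) \<Rightarrow> 'a set \<Rightarrow> 'a \<Rightarrow> nat \<Rightarrow> 'a \<Rightarrow> real" where
  "hb P C x 0 y = (if y = x then 1 else 0)"
| "hb P C x (Suc n) y = (if y = x then 1 else if y \<in> C then 0 else (\<Sum>z\<in>UNIV. P y z * hb P C x n z))"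

fun sk :: "('a::finite \<Rightarrow> 'a \<Rightarrow> real) \<Rightarrow> 'a set \<Rightarrow> nat \<Rightarrow> 'a \<Rightarrow> real" where
  "sk P C 0 y = (if y \<in> C then 0 else 1)"
| "sk P C (Suc n) y = (if y \<in> C then 0 else (\<Sum>z\<in>UNIV. P y z * sk P C n z))"

lemma hb_eq:
  assumes "stochastic P" "x \<notin> C"
  shows "hb P C x n y = (\<Sum>xs\<in>Ls n y. if goodl C x xs then wt P xs else 0)"
proof (induction n arbitrary: y)
  case 0 then show ?case using assms by (simp add: Ls_0)
next
  case (Suc n)
  have "(\<Sum>xs\<in>Ls (Suc n) y. if goodl C x xs then wt P xs else 0)
     = (\<Sum>z\<in>UNIV. \<Sum>ys\<in>Ls n z. if goodl C x (y # ys) then P y z * wt P ys else 0)"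
    unfolding sum_Ls_Suc by (intro sum.cong refl) (simp add: wt_Cons_Ls)
  also have "\<dots> = hb P C x (Suc n) y"
  proof (cases "y = x")
    case True
    then have "(\<Sum>z\<in>UNIV. \<Sum>ys\<in>Ls n z. if goodl C x (y # ys) then P y z * wt P ys else 0)
       = (\<Sum>z\<in>UNIV. P y z * (\<Sum>ys\<in>Ls n z. wt P ys))"
      using assms by (simp add: sum_distrib_left)
    also have "\<dots> = 1" using assms by (simp add: sum_wt stochastic_def)
    finally show ?thesis using True by simp
  next
    case False
    then show ?thesis
      by (simp add: Suc sum_distrib_left if_distrib cong: if_cong)
  qed
  finally show ?case by simp
qed

lemma sk_eq:
  shows "sk P C n y = (\<Sum>xs\<in>Ls n y. if (\<forall>a\<in>set xs. a \<notin> C) then wt P xs else 0)"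
proof (induction n arbitrary: y)
  case 0 then show ?case by (simp add: Ls_0)
next
  case (Suc n)
  have "(\<Sum>xs\<in>Ls (Suc n) y. if (\<forall>a\<in>set xs. a \<notin> C) then wt P xs else 0)
     = (\<Sum>z\<in>UNIV. \<Sum>ys\<in>Ls n z. if (\<forall>a\<in>set (y # ys). a \<notin> C) then P y z * wt P ys else 0)"
    unfolding sum_Ls_Suc by (intro sum.cong refl) (simp add: wt_Cons_Ls)
  also have "\<dots> = sk P C (Suc n) y"
    by (simp add: Suc sum_distrib_left if_distrib cong: if_cong)
  finally show ?case by simp
qed

lemma hb_bounds:
  assumes "stochastic P"
  shows "0 \<le> hb P C x n y \<and> hb P C x n y \<le> 1"
proof (induction n arbitrary: y)
  case 0 then show ?case by simp
next
  case (Suc n)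
  have P0: "\<And>z. 0 \<le> P y z" and P1: "(\<Sum>z\<in>UNIV. P y z) = 1" using assms by (auto simp: stochastic_def)
  have "(\<Sum>z\<in>UNIV. P y z * hb P C x n z) \<le> (\<Sum>z\<in>UNIV. P y z)"
    by (intro sum_mono) (simp add: P0 Suc mult_left_le)
  moreover have "0 \<le> (\<Sum>z\<in>UNIV. P y z * hb P C x n z)"
    by (intro sum_nonneg) (simp add: P0 Suc)
  ultimately show ?case using P1 by auto
qed

lemma hb_mono:
  assumes "stochastic P"
  shows "hb P C x n y \<le> hb P C x (Suc n) y"
proof (induction n arbitrary: y)
  case 0
  have "0 \<le> (\<Sum>z\<in>UNIV. P y z * hb P C x 0 z)"
    using assms by (intro sum_nonneg) (simp add: stochastic_def)
  then show ?case by auto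
next
  case (Suc n)
  have P0: "\<And>z. 0 \<le> P y z" using assms by (auto simp: stochastic_def)
  have "(\<Sum>z\<in>UNIV. P y z * hb P C x n z) \<le> (\<Sum>z\<in>UNIV. P y z * hb P C x (Suc n) z)"
    by (intro sum_mono mult_left_mono) (rule Suc.IH, rule P0)
  then show ?case by (simp only: hb.simps) auto
qed


definition hl :: "('a::finite \<Rightarrow> 'a \<Rightarrow> real) \<Rightarrow> 'a set \<Rightarrow> 'a \<Rightarrow> 'a \<Rightarrow> real" where
  "hl P C x y = lim (\<lambda>n. hb P C x n y)"

lemma hl_lim:
  assumes "stochastic P"
  shows "(\<lambda>n. hb P C x n y) \<longlonglongrightarrow> hl P C x y"
proof -
  have "incseq (\<lambda>n. hb P C x n y)"
    using hb_mono[OF assms] by (simp add: incseq_Suc_iff)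
  moreover have "\<forall>i. hb P C x i y \<le> 1" using hb_bounds[OF assms] by blast
  ultimately obtain L where "(\<lambda>n. hb P C x n y) \<longlonglongrightarrow> L"
    using incseq_convergent[of "\<lambda>n. hb P C x n y" 1] by blast
  then show ?thesis unfolding hl_def by (simp add: limI)
qed

lemma hl_props:
  assumes "stochastic P" "x \<notin> C"
  shows "hl P C x x = 1" "y \<in> C \<Longrightarrow> hl P C x y = 0" "0 \<le> hl P C x y" "hl P C x y \<le> 1"
    "y \<noteq> x \<Longrightarrow> y \<notin> C \<Longrightarrow> hl P C x y = (\<Sum>z\<in>UNIV. P y z * hl P C x z)"
    "hb P C x n y \<le> hl P C x y"
proof -
  note L = hl_lim[OF assms(1), of C x]
  have "(\<lambda>n. hb P C x n x) = (\<lambda>n. 1)" by (rule ext, case_tac n) auto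
  then have "(\<lambda>n. 1::real) \<longlonglongrightarrow> hl P C x x" using L[of x] by simp
  then show "hl P C x x = 1" using LIMSEQ_unique[OF _ tendsto_const] by blast
  show "y \<in> C \<Longrightarrow> hl P C x y = 0"
  proof -
    assume "y \<in> C"
    then have "(\<lambda>n. hb P C x n y) = (\<lambda>n. 0)" using assms by (intro ext, case_tac n) auto
    then have "(\<lambda>n. 0::real) \<longlonglongrightarrow> hl P C x y" using L[of y] by simp
    then show ?thesis using LIMSEQ_unique[OF _ tendsto_const] by blast
  qed
  show "0 \<le> hl P C x y" using L[of y] hb_bounds[OF assms(1)] by (intro LIMSEQ_le_const) auto
  show "hl P C x y \<le> 1" using L[of y] hb_bounds[OF assms(1)] by (intro LIMSEQ_le_const2) auto
  show "y \<noteq> x \<Longrightarrow> y \<notin> C \<Longrightarrow> hl P C x y = (\<Sum>z\<in>UNIV. P y z * hl P C x z)"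
  proof -
    assume "y \<noteq> x" "y \<notin> C"
    then have "(\<lambda>n. hb P C x (Suc n) y) = (\<lambda>n. \<Sum>z\<in>UNIV. P y z * hb P C x n z)" by simp
    moreover have "(\<lambda>n. \<Sum>z\<in>UNIV. P y z * hb P C x n z) \<longlonglongrightarrow> (\<Sum>z\<in>UNIV. P y z * hl P C x z)"
      by (intro tendsto_intros L)
    moreover have "(\<lambda>n. hb P C x (Suc n) y) \<longlonglongrightarrow> hl P C x y"
      using L[of y] by (rule LIMSEQ_Suc)
    ultimately show ?thesis using LIMSEQ_unique by (metis (no_types, lifting))
  qed
  have "incseq (\<lambda>n. hb P C x n y)"
    using hb_mono[OF assms(1)] by (simp add: incseq_Suc_iff)
  then show "hb P C x n y \<le> hl P C x y" using L[of y] by (metis incseq_le)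
qed


lemma is_path_snoc:
  assumes "is_path P xs" "0 < P (last xs) z"
  shows "is_path P (xs @ [z])"
  unfolding is_path_def
proof (intro conjI allI impI)
  show "xs @ [z] \<noteq> []" by simp
  fix i assume i: "Suc i < length (xs @ [z])"
  show "0 < P ((xs @ [z]) ! i) ((xs @ [z]) ! Suc i)"
  proof (cases "Suc i < length xs")
    case True then show ?thesis using assms(1) by (simp add: nth_append is_path_def)
  next
    case False
    then have "Suc i = length xs" using i by simp
    moreover have "xs \<noteq> []" using assms(1) by (simp add: is_path_def)
    ultimately have "i = length xs - 1" "Suc i = length xs" by simp_all
    then show ?thesis using assms(2) \<open>xs \<noteq> []\<close> by (simp add: nth_append last_conv_nth)
  qed
qed

lemma stat_swap:
  fixes \<pi> :: "'a::finite \<Rightarrow> real"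
  assumes "stationary_dist P \<pi>"
  shows "(\<Sum>y\<in>UNIV. \<pi> y * (\<Sum>z\<in>UNIV. P y z * f z)) = (\<Sum>z\<in>UNIV. \<pi> z * f z)"
proof -
  have "(\<Sum>y\<in>UNIV. \<pi> y * (\<Sum>z\<in>UNIV. P y z * f z)) = (\<Sum>z\<in>UNIV. (\<Sum>y\<in>UNIV. \<pi> y * P y z) * f z)"
    unfolding sum_distrib_left sum_distrib_right
    by (subst sum.swap) (simp add: mult.assoc)
  also have "\<dots> = (\<Sum>z\<in>UNIV. \<pi> z * f z)" using assms by (simp add: stationary_dist_def)
  finally show ?thesis .
qed

lemma core:
  fixes \<pi> :: "'a::finite \<Rightarrow> real" and h :: "'a \<Rightarrow> real"
  assumes st: "stochastic P" and sd: "stationary_dist P \<pi>" and xC: "x \<notin> C" and xB: "x \<notin> B"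
    and paths: "\<forall>xs. is_path P xs \<and> hd xs = x \<and> last xs \<in> C \<longrightarrow> set xs \<inter> B \<noteq> {}"
    and h1: "h x = 1" and hb: "\<And>y. 0 \<le> h y \<and> h y \<le> 1"
    and hh: "\<And>y. y \<noteq> x \<Longrightarrow> y \<notin> C \<Longrightarrow> h y = (\<Sum>z\<in>UNIV. P y z * h z)"
  shows "\<pi> x * (1 - (\<Sum>z\<in>UNIV. P x z * h z)) \<le> (\<Sum>y\<in>B. \<pi> y)"
proof -
  have P0: "\<And>y z. 0 \<le> P y z" and P1: "\<And>y. (\<Sum>z\<in>UNIV. P y z) = 1" using st by (auto simp: stochastic_def)
  have pi0: "\<And>y. 0 \<le> \<pi> y" using sd by (auto simp: stationary_dist_def)
  define R where "R = {z. \<exists>xs. is_path P xs \<and> hd xs = x \<and> last xs = z \<and> set xs \<inter> B = {}}"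
  have xR: "x \<in> R" unfolding R_def using xB by (intro CollectI exI[of _ "[x]"]) (simp add: is_path_def)
  have RC: "z \<notin> C" if "z \<in> R" for z using that paths unfolding R_def by blast
  have Rcl: "z \<in> R \<or> z \<in> B" if "y \<in> R" "0 < P y z" for y z
  proof (cases "z \<in> B")
    case False
    from that(1) obtain xs where xs: "is_path P xs" "hd xs = x" "last xs = y" "set xs \<inter> B = {}"
      unfolding R_def by blast
    have "is_path P (xs @ [z])" using xs that(2) by (intro is_path_snoc) auto
    moreover have "xs \<noteq> []" using xs by (simp add: is_path_def)
    ultimately have "z \<in> R" unfolding R_def using xs False
      by (intro CollectI exI[of _ "xs @ [z]"]) auto
    then show ?thesis by simp
  qed simp
  define r where "r z = (if z \<in> R then 1 else (0::real))" for z
  define g where "g z = h z * r z" for z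
  define bi where "bi z = (if z \<in> B then 1 else (0::real))" for z
  define a where "a y = \<pi> y * ((\<Sum>z\<in>UNIV. P y z * g z) - g y)" for y
  define b where "b y = \<pi> y * ((\<Sum>z\<in>UNIV. P y z * r z) - r y)" for y
  define cc where "cc y = \<pi> y * (\<Sum>z\<in>UNIV. P y z * bi z)" for y
  have gh: "g z \<le> h z" for z using hb[of z] by (auto simp: g_def r_def)
  have gr: "g z \<le> r z" for z using hb[of z] by (auto simp: g_def r_def)
  have sa: "(\<Sum>y\<in>UNIV. a y) = 0"
    using stat_swap[OF sd, of g] by (simp add: a_def right_diff_distrib sum_subtractf)
  have sb: "(\<Sum>y\<in>UNIV. b y) = 0"
    using stat_swap[OF sd, of r] by (simp add: b_def right_diff_distrib sum_subtractf)
  have scc: "(\<Sum>y\<in>UNIV. cc y) = (\<Sum>y\<in>B. \<pi> y)"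
  proof -
    have "(\<Sum>y\<in>UNIV. cc y) = (\<Sum>z\<in>UNIV. \<pi> z * bi z)" using stat_swap[OF sd, of bi] by (simp add: cc_def)
    also have "\<dots> = (\<Sum>z\<in>B. \<pi> z)" unfolding bi_def
      by (simp add: if_distrib sum.If_cases Int_absorb1)
    finally show ?thesis .
  qed
  have cc0: "0 \<le> cc y" for y
    unfolding cc_def bi_def by (intro mult_nonneg_nonneg pi0 sum_nonneg) (auto simp add: P0)
  have bc: "0 \<le> b y + cc y" if "y \<in> R" for y
  proof -
    have "(\<Sum>z\<in>UNIV. P y z) \<le> (\<Sum>z\<in>UNIV. P y z * r z + P y z * bi z)"
    proof (intro sum_mono)
      fix z
      show "P y z \<le> P y z * r z + P y z * bi z"
        using Rcl[OF that, of z] P0[of y z] by (cases "P y z = 0") (auto simp: r_def bi_def)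
    qed
    then have "0 \<le> (\<Sum>z\<in>UNIV. P y z * r z) - r y + (\<Sum>z\<in>UNIV. P y z * bi z)"
      using that P1[of y] by (simp add: r_def sum.distrib)
    then have "0 \<le> \<pi> y * ((\<Sum>z\<in>UNIV. P y z * r z) - r y + (\<Sum>z\<in>UNIV. P y z * bi z))"
      using pi0 by simp
    then show ?thesis by (simp add: b_def cc_def algebra_simps)
  qed
  have ab: "a y \<le> b y + cc y" if "y \<noteq> x" for y
  proof (cases "y \<in> R")
    case True
    have "(\<Sum>z\<in>UNIV. P y z * g z) \<le> (\<Sum>z\<in>UNIV. P y z * h z)"
      by (intro sum_mono mult_left_mono gh P0)
    also have "\<dots> = g y" using hh[OF that RC[OF True]] True by (simp add: g_def r_def)
    finally have "a y \<le> 0" unfolding a_def using pi0[of y] by (simp add: mult_nonneg_nonpos)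
    then show ?thesis using bc[OF True] by simp
  next
    case False
    have "(\<Sum>z\<in>UNIV. P y z * g z) \<le> (\<Sum>z\<in>UNIV. P y z * r z)"
      by (intro sum_mono mult_left_mono gr P0)
    then have "a y \<le> b y" unfolding a_def b_def using False pi0[of y]
      by (simp add: g_def r_def mult_left_mono)
    then show ?thesis using cc0[of y] by simp
  qed
  have "(\<Sum>y\<in>UNIV. a y) = a x + (\<Sum>y\<in>UNIV - {x}. a y)" by (simp add: sum.remove)
  moreover have "(\<Sum>y\<in>UNIV. b y + cc y) = (b x + cc x) + (\<Sum>y\<in>UNIV - {x}. b y + cc y)"
    by (simp add: sum.remove)
  moreover have "(\<Sum>y\<in>UNIV - {x}. a y) \<le> (\<Sum>y\<in>UNIV - {x}. b y + cc y)"
    using ab by (intro sum_mono) auto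
  moreover have "(\<Sum>y\<in>UNIV. b y + cc y) = (\<Sum>y\<in>B. \<pi> y)" using sb scc by (simp add: sum.distrib)
  ultimately have nax: "- a x \<le> (\<Sum>y\<in>B. \<pi> y)" using sa bc[OF xR] by linarith
  have "(\<Sum>z\<in>UNIV. P x z * g z) \<le> (\<Sum>z\<in>UNIV. P x z * h z)"
    by (intro sum_mono mult_left_mono gh P0)
  then have "\<pi> x * (1 - (\<Sum>z\<in>UNIV. P x z * h z)) \<le> \<pi> x * (1 - (\<Sum>z\<in>UNIV. P x z * g z))"
    using pi0[of x] by (intro mult_left_mono) auto
  moreover have "- a x = \<pi> x * (1 - (\<Sum>z\<in>UNIV. P x z * g z))"
    unfolding a_def using xR h1 by (simp add: g_def r_def algebra_simps)
  ultimately have "\<pi> x * (1 - (\<Sum>z\<in>UNIV. P x z * h z)) \<le> - a x" by linarith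
  then show ?thesis using nax by linarith
qed


lemma sk_C: "y \<in> C \<Longrightarrow> sk P C n y = 0"
  by (cases n) auto

lemma subsol:
  fixes h :: "'a::finite \<Rightarrow> real"
  assumes st: "stochastic P" and xC: "x \<notin> C" and G0: "0 \<le> G"
    and core: "G * (1 - (\<Sum>z\<in>UNIV. P x z * h z)) \<le> 1"
    and h1: "h x = 1" and hC: "\<And>y. y \<in> C \<Longrightarrow> h y = 0" and hb: "\<And>y. 0 \<le> h y \<and> h y \<le> 1"
    and hh: "\<And>y. y \<noteq> x \<Longrightarrow> y \<notin> C \<Longrightarrow> h y = (\<Sum>z\<in>UNIV. P y z * h z)"
  shows "G * h y \<le> (\<Sum>t<n. sk P C t y) + G * sk P C n y"
proof (induction n arbitrary: y)
  case 0
  show ?case using hb[of y] hC[of y] G0 by (cases "y \<in> C") (auto simp: mult_left_le)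
next
  case (Suc n)
  have P0: "\<And>y z. 0 \<le> P y z" using st by (auto simp: stochastic_def)
  show ?case
  proof (cases "y \<in> C")
    case True then show ?thesis using hC[OF True] by (simp add: sk_C)
  next
    case False
    have sub: "G * h y \<le> 1 + (\<Sum>z\<in>UNIV. P y z * (G * h z))"
    proof (cases "y = x")
      case True
      then show ?thesis using core h1 by (simp add: sum_distrib_left[symmetric] algebra_simps)
    next
      case False
      then show ?thesis using hh[OF False \<open>y \<notin> C\<close>]
        by (simp add: sum_distrib_left mult.left_commute)
    qed
    also have "\<dots> \<le> 1 + (\<Sum>z\<in>UNIV. P y z * ((\<Sum>t<n. sk P C t z) + G * sk P C n z))"
      by (intro add_left_mono sum_mono mult_left_mono Suc P0)
    also have "\<dots> = (\<Sum>t<Suc n. sk P C t y) + G * sk P C (Suc n) y"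
      using False
      by (simp add: sum.lessThan_Suc_shift distrib_left sum.distrib sum_distrib_left
          sum.swap[of _ "{..<n}" UNIV] mult.left_commute del: sum.lessThan_Suc)
    finally show ?thesis .
  qed
qed


definition pre :: "(nat \<Rightarrow> 'w \<Rightarrow> 'a) \<Rightarrow> nat \<Rightarrow> 'w \<Rightarrow> 'a list" where
  "pre X n \<omega> = map (\<lambda>i. X i \<omega>) [0..<Suc n]"

lemma pre_nth: "i \<le> n \<Longrightarrow> pre X n \<omega> ! i = X i \<omega>"
  unfolding pre_def by (simp add: nth_upt del: upt_Suc)

lemma pre_length[simp]: "length (pre X n \<omega>) = Suc n"
  unfolding pre_def by simp

lemma pre_hd[simp]: "hd (pre X n \<omega>) = X 0 \<omega>"
  unfolding pre_def by (simp add: upt_conv_Cons del: upt_Suc)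

lemma cyl_sets:
  assumes "markov_chain M X P"
  shows "{\<omega>\<in>space M. \<forall>i\<le>n. X i \<omega> = a i} \<in> sets M"
proof -
  have [measurable]: "\<And>i. X i \<in> measurable M (count_space UNIV)"
    using assms by (simp add: markov_chain_def)
  show ?thesis by measurable
qed

lemma L1:
  fixes X :: "nat \<Rightarrow> 'w \<Rightarrow> 'a::finite"
  assumes mc: "markov_chain M X P"
  shows "measure M {\<omega>\<in>space M. X 0 \<omega> = x0 \<and> Q (pre X n \<omega>)}
     = measure M {\<omega>\<in>space M. X 0 \<omega> = x0} * (\<Sum>xs\<in>Ls n x0. if Q xs then wt P xs else 0)"
proof -
  interpret prob_space M using mc by (simp add: markov_chain_def)
  define cyl where "cyl xs = {\<omega>\<in>space M. \<forall>i\<le>n. X i \<omega> = xs ! i}" for xs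
  define S where "S = {xs\<in>Ls n x0. Q xs}"
  have finS: "finite S" unfolding S_def using finite_Ls by (rule finite_subset[rotated]) auto
  have eq: "{\<omega>\<in>space M. X 0 \<omega> = x0 \<and> Q (pre X n \<omega>)} = (\<Union>xs\<in>S. cyl xs)"
  proof (intro equalityI subsetI)
    fix \<omega> assume "\<omega> \<in> {\<omega>\<in>space M. X 0 \<omega> = x0 \<and> Q (pre X n \<omega>)}"
    then have \<omega>: "\<omega> \<in> space M" "X 0 \<omega> = x0" "Q (pre X n \<omega>)" by auto
    have "pre X n \<omega> \<in> S" unfolding S_def Ls_def using \<omega>
      by simp
    moreover have "\<omega> \<in> cyl (pre X n \<omega>)" unfolding cyl_def using \<omega> by (simp add: pre_nth)
    ultimately show "\<omega> \<in> (\<Union>xs\<in>S. cyl xs)" by blast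
  next
    fix \<omega> assume "\<omega> \<in> (\<Union>xs\<in>S. cyl xs)"
    then obtain xs where "xs \<in> S" "\<omega> \<in> cyl xs" by blast
    then have xs: "length xs = Suc n" "hd xs = x0" "Q xs" "\<omega> \<in> space M" "\<forall>i\<le>n. X i \<omega> = xs ! i"
      by (auto simp: S_def Ls_def cyl_def)
    have "pre X n \<omega> = xs" using xs by (intro nth_equalityI) (auto simp: pre_nth)
    moreover have "X 0 \<omega> = x0" using xs by (simp add: hd_conv_nth[symmetric] Suc_le_eq, 
        metis hd_conv_nth list.size(3) nat.distinct(1))
    ultimately show "\<omega> \<in> {\<omega>\<in>space M. X 0 \<omega> = x0 \<and> Q (pre X n \<omega>)}" using xs by auto
  qed
  have "measure M (\<Union>xs\<in>S. cyl xs) = (\<Sum>xs\<in>S. measure M (cyl xs))"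
  proof (rule finite_measure_finite_Union[OF finS])
    show "cyl ` S \<subseteq> sets M" unfolding cyl_def using cyl_sets[OF mc] by blast
    show "disjoint_family_on cyl S"
      unfolding disjoint_family_on_def
    proof (intro ballI impI)
      fix xs ys assume "xs \<in> S" "ys \<in> S" "xs \<noteq> ys"
      then have l: "length xs = Suc n" "length ys = Suc n" by (auto simp: S_def Ls_def)
      show "cyl xs \<inter> cyl ys = {}"
      proof (rule ccontr)
        assume "cyl xs \<inter> cyl ys \<noteq> {}"
        then obtain \<omega> where "\<forall>i\<le>n. X i \<omega> = xs ! i" "\<forall>i\<le>n. X i \<omega> = ys ! i" unfolding cyl_def by blast
        then have "xs = ys" using l by (intro nth_equalityI) auto
        then show False using \<open>xs \<noteq> ys\<close> by simp
      qed
    qed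
  qed
  also have "\<dots> = (\<Sum>xs\<in>S. measure M {\<omega>\<in>space M. X 0 \<omega> = x0} * wt P xs)"
  proof (rule sum.cong[OF refl])
    fix xs assume "xs \<in> S"
    then have l: "length xs = Suc n" "hd xs = x0" by (auto simp: S_def Ls_def)
    then have h0: "xs ! 0 = x0" by (metis hd_conv_nth list.size(3) nat.distinct(1))
    have "measure M (cyl xs) = measure M {\<omega>\<in>space M. X 0 \<omega> = xs ! 0} * (\<Prod>i<n. P (xs ! i) (xs ! Suc i))"
      using mc unfolding markov_chain_def cyl_def by blast
    then show "measure M (cyl xs) = measure M {\<omega>\<in>space M. X 0 \<omega> = x0} * wt P xs"
      using l h0 by (simp add: wt_prod)
  qed
  also have "\<dots> = measure M {\<omega>\<in>space M. X 0 \<omega> = x0} * (\<Sum>xs\<in>Ls n x0. if Q xs then wt P xs else 0)"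
    unfolding S_def by (simp add: sum_distrib_left[symmetric] sum.inter_filter finite_Ls)
  finally show ?thesis using eq by simp
qed

lemma pre_set_eq:
  "{\<omega>\<in>space M. X 0 \<omega> = x0 \<and> Q (pre X n \<omega>)}
     = (\<Union>xs\<in>{xs\<in>Ls n x0. Q xs}. {\<omega>\<in>space M. \<forall>i\<le>n. X i \<omega> = xs ! i})"
proof (intro equalityI subsetI)
  fix \<omega> assume "\<omega> \<in> {\<omega>\<in>space M. X 0 \<omega> = x0 \<and> Q (pre X n \<omega>)}"
  then have \<omega>: "\<omega> \<in> space M" "X 0 \<omega> = x0" "Q (pre X n \<omega>)" by auto
  have "pre X n \<omega> \<in> {xs\<in>Ls n x0. Q xs}" unfolding Ls_def using \<omega> by simp
  moreover have "\<omega> \<in> {\<omega>\<in>space M. \<forall>i\<le>n. X i \<omega> = pre X n \<omega> ! i}" using \<omega> by (simp add: pre_nth)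
  ultimately show "\<omega> \<in> (\<Union>xs\<in>{xs\<in>Ls n x0. Q xs}. {\<omega>\<in>space M. \<forall>i\<le>n. X i \<omega> = xs ! i})" by blast
next
  fix \<omega> assume "\<omega> \<in> (\<Union>xs\<in>{xs\<in>Ls n x0. Q xs}. {\<omega>\<in>space M. \<forall>i\<le>n. X i \<omega> = xs ! i})"
  then obtain xs where xs: "length xs = Suc n" "hd xs = x0" "Q xs" "\<omega> \<in> space M" "\<forall>i\<le>n. X i \<omega> = xs ! i"
    by (auto simp: Ls_def)
  have "pre X n \<omega> = xs" using xs by (intro nth_equalityI) (auto simp: pre_nth)
  moreover have "X 0 \<omega> = x0" using xs by (metis hd_conv_nth list.size(3) nat.distinct(1) le0)
  ultimately show "\<omega> \<in> {\<omega>\<in>space M. X 0 \<omega> = x0 \<and> Q (pre X n \<omega>)}" using xs by auto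
qed

lemma pre_sets:
  fixes X :: "nat \<Rightarrow> 'w \<Rightarrow> 'a::finite"
  assumes mc: "markov_chain M X P"
  shows "{\<omega>\<in>space M. X 0 \<omega> = x0 \<and> Q (pre X n \<omega>)} \<in> sets M"
proof -
  have "finite {xs\<in>Ls n x0. Q xs}" using finite_Ls by (rule finite_subset[rotated]) auto
  then show ?thesis unfolding pre_set_eq using cyl_sets[OF mc] by blast
qed

lemma goodl_iff: "goodl C x xs \<longleftrightarrow> (\<exists>k<length xs. xs ! k = x \<and> (\<forall>i\<le>k. xs ! i \<notin> C))"
proof (induction xs)
  case Nil then show ?case by simp
next
  case (Cons y ys)
  show ?case
  proof
    assume "goodl C x (y # ys)"
    then have "y \<notin> C" "y = x \<or> goodl C x ys" by auto
    then show "\<exists>k<length (y # ys). (y # ys) ! k = x \<and> (\<forall>i\<le>k. (y # ys) ! i \<notin> C)"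
    proof (elim disjE)
      assume "y = x" then show ?thesis using \<open>y \<notin> C\<close> by (intro exI[of _ 0]) auto
    next
      assume "goodl C x ys"
      then obtain k where k: "k < length ys" "ys ! k = x" "\<forall>i\<le>k. ys ! i \<notin> C" using Cons by blast
      show ?thesis
      proof (intro exI[of _ "Suc k"] conjI allI impI)
        fix i assume "i \<le> Suc k"
        then show "(y # ys) ! i \<notin> C" using k \<open>y \<notin> C\<close> by (cases i) auto
      qed (use k in auto)
    qed
  next
    assume "\<exists>k<length (y # ys). (y # ys) ! k = x \<and> (\<forall>i\<le>k. (y # ys) ! i \<notin> C)"
    then obtain k where k: "k < length (y # ys)" "(y # ys) ! k = x" "\<forall>i\<le>k. (y # ys) ! i \<notin> C" by blast
    have yC: "y \<notin> C" using k(3) by force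
    show "goodl C x (y # ys)"
    proof (cases k)
      case 0 then show ?thesis using k yC by simp
    next
      case (Suc k')
      have "\<forall>i\<le>k'. ys ! i \<notin> C" using k(3) Suc by (metis Suc_le_mono nth_Cons_Suc)
      then have "goodl C x ys" using Cons k Suc by auto
      then show ?thesis using yC by simp
    qed
  qed
qed

lemma hit_le: "X k \<omega> \<in> A \<Longrightarrow> hit X A \<omega> \<le> enat k"
  unfolding hit_def by (auto intro: Least_le)

lemma hit_enat: "hit X A \<omega> = enat k \<Longrightarrow> X k \<omega> \<in> A"
  unfolding hit_def by (auto split: if_splits intro: LeastI_ex)

lemma hit_less: "(\<forall>i\<le>t. X i \<omega> \<notin> A) \<Longrightarrow> enat t < hit X A \<omega>"
proof -
  assume a: "\<forall>i\<le>t. X i \<omega> \<notin> A"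
  show ?thesis
  proof (cases "hit X A \<omega>")
    case (enat k)
    then have "X k \<omega> \<in> A" by (rule hit_enat)
    then have "t < k" using a by (meson not_le)
    then show ?thesis using enat by simp
  qed simp
qed

lemma cnt_le: "(\<Sum>t<n. if enat t < H then 1 else 0 :: ennreal) \<le> ennreal_of_enat H"
proof (cases H)
  case (enat k)
  have "(\<Sum>t<n. if enat t < enat k then 1 else 0 :: ennreal) = of_nat (min n k)"
    by (induction n) (auto simp: min_def)
  then show ?thesis using enat by simp
qed simp

lemma sk_nonneg: "stochastic P \<Longrightarrow> 0 \<le> sk P C n y"
  by (induction n arbitrary: y) (auto simp: stochastic_def intro!: sum_nonneg)


theorem propositionI1:
  fixes M :: "'w measure" and X :: "nat \<Rightarrow> 'w \<Rightarrow> 'a::finite"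
    and P :: "'a \<Rightarrow> 'a \<Rightarrow> real" and \<pi> :: "'a \<Rightarrow> real"
    and x x0 :: 'a and C B :: "'a set" and c :: real
  assumes "markov_chain M X P" and "stochastic P"
    and "irreducible_chain P" and "aperiodic_chain P"
    and "stationary_dist P \<pi>"
    and "measure M {\<omega>\<in>space M. X 0 \<omega> = x0} > 0"
    and "cond_prob_start M X x0 {\<omega>\<in>space M. hit X {x} \<omega> < hit X C \<omega>} \<ge> c"
    and "\<forall>xs. is_path P xs \<and> hd xs = x \<and> last xs \<in> C \<longrightarrow> set xs \<inter> B \<noteq> {}"
  shows "cond_exp_start M X x0 (\<lambda>\<omega>. ennreal_of_enat (hit X C \<omega>))
           \<ge> ennreal (c * \<pi> x / (\<Sum>y\<in>B. \<pi> y))"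
proof -
  note mc = assms(1) and st = assms(2) and sd = assms(5) and paths = assms(8)
  interpret prob_space M using mc by (simp add: markov_chain_def)
  have Xm[measurable]: "\<And>i. X i \<in> measurable M (count_space UNIV)"
    using mc by (simp add: markov_chain_def)
  define m0 where "m0 = measure M {\<omega>\<in>space M. X 0 \<omega> = x0}"
  have m0: "0 < m0" using assms(6) by (simp add: m0_def)
  define \<mu> where "\<mu> = (\<Sum>y\<in>B. \<pi> y)"
  have pi0: "\<And>y. 0 \<le> \<pi> y" using sd by (auto simp: stationary_dist_def)
  have mu0: "0 \<le> \<mu>" unfolding \<mu>_def by (intro sum_nonneg pi0)
  define E where "E = {\<omega>\<in>space M. hit X {x} \<omega> < hit X C \<omega>} \<inter> {\<omega>\<in>space M. X 0 \<omega> = x0}"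
  have cE: "c \<le> measure M E / m0" using assms(7) by (simp add: cond_prob_start_def E_def m0_def)
  show ?thesis
  proof (cases "c * \<pi> x / \<mu> \<le> 0")
    case True
    then show ?thesis by (simp add: \<mu>_def ennreal_neg)
  next
    case False
    then have pos: "0 < c * \<pi> x / \<mu>" by simp
    have muP: "0 < \<mu>" using pos mu0 by (cases "\<mu> = 0") auto
    have "0 < c * \<pi> x" using pos muP by (simp add: zero_less_divide_iff)
    then have cP: "0 < c" using pi0[of x] by (simp add: zero_less_mult_iff)
    have xC: "x \<notin> C"
    proof
      assume "x \<in> C"
      have "E = {}"
      proof -
        have "\<not> hit X {x} \<omega> < hit X C \<omega>" for \<omega>
        proof (cases "hit X {x} \<omega>")
          case (enat k)
          then have "X k \<omega> \<in> C" using hit_enat[OF enat] \<open>x \<in> C\<close> by simp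
          then show ?thesis using hit_le[of X k \<omega> C] enat by simp
        qed simp
        then show ?thesis by (auto simp: E_def)
      qed
      then show False using cE cP by simp
    qed
    define h where "h = hl P C x"
    note hp = hl_props[OF st xC, folded h_def]
    define G where "G = \<pi> x / \<mu>"
    have G0: "0 \<le> G" unfolding G_def using pi0 mu0 by simp
    have Ph: "0 \<le> (\<Sum>z\<in>UNIV. P x z * h z) \<and> (\<Sum>z\<in>UNIV. P x z * h z) \<le> 1"
    proof -
      have P0: "\<And>z. 0 \<le> P x z" and P1: "(\<Sum>z\<in>UNIV. P x z) = 1" using st by (auto simp: stochastic_def)
      have "(\<Sum>z\<in>UNIV. P x z * h z) \<le> (\<Sum>z\<in>UNIV. P x z)"
        by (intro sum_mono) (simp add: P0 hp mult_left_le)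
      moreover have "0 \<le> (\<Sum>z\<in>UNIV. P x z * h z)" by (intro sum_nonneg) (simp add: P0 hp)
      ultimately show ?thesis using P1 by simp
    qed
    have core1: "\<pi> x * (1 - (\<Sum>z\<in>UNIV. P x z * h z)) \<le> \<mu>"
    proof (cases "x \<in> B")
      case True
      have "\<pi> x \<le> \<mu>" unfolding \<mu>_def using True pi0 by (intro member_le_sum) auto
      moreover have "\<pi> x * (1 - (\<Sum>z\<in>UNIV. P x z * h z)) \<le> \<pi> x"
        using Ph pi0[of x] by (simp add: mult_left_le)
      ultimately show ?thesis by linarith
    next
      case False
      show ?thesis unfolding \<mu>_def
        by (rule core[OF st sd xC False paths]) (use hp in auto)
    qed
    have core2: "G * (1 - (\<Sum>z\<in>UNIV. P x z * h z)) \<le> 1"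
      using core1 muP unfolding G_def by (simp add: divide_simps)
    have sub: "G * h x0 \<le> (\<Sum>t<n. sk P C t x0) + G * sk P C n x0" for n
      by (rule subsol[OF st xC G0 core2]) (use hp in auto)
    define Gs where "Gs n = {\<omega>\<in>space M. X 0 \<omega> = x0 \<and> goodl C x (pre X n \<omega>)}" for n
    have Gs_sets: "range Gs \<subseteq> sets M" unfolding Gs_def using pre_sets[OF mc] by blast
    have Gs_meas: "measure M (Gs n) = m0 * hb P C x n x0" for n
      unfolding Gs_def m0_def L1[OF mc] hb_eq[OF st xC] by simp
    have Gs_inc: "incseq Gs"
    proof (rule incseq_SucI, rule subsetI)
      fix n \<omega> assume "\<omega> \<in> Gs n"
      then have "\<omega> \<in> space M" "X 0 \<omega> = x0" "goodl C x (pre X n \<omega>)" by (auto simp: Gs_def)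
      then obtain k where k0: "k < Suc n" "pre X n \<omega> ! k = x" "\<forall>i\<le>k. pre X n \<omega> ! i \<notin> C"
        unfolding goodl_iff by auto
      then have k: "k \<le> n" "X k \<omega> = x" "\<forall>i\<le>k. X i \<omega> \<notin> C"
        by (auto simp: pre_nth)
      then have "goodl C x (pre X (Suc n) \<omega>)" unfolding goodl_iff
        by (intro exI[of _ k]) (auto simp: pre_nth)
      then show "\<omega> \<in> Gs (Suc n)" using \<open>\<omega> \<in> space M\<close> \<open>X 0 \<omega> = x0\<close> by (simp add: Gs_def)
    qed
    have EG: "E \<subseteq> (\<Union>n. Gs n)"
    proof
      fix \<omega> assume "\<omega> \<in> E"
      then have \<omega>: "\<omega> \<in> space M" "X 0 \<omega> = x0" "hit X {x} \<omega> < hit X C \<omega>" by (auto simp: E_def)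
      then obtain k where k: "hit X {x} \<omega> = enat k" by (cases "hit X {x} \<omega>") auto
      then have xk: "X k \<omega> = x" using hit_enat[OF k] by simp
      have "X i \<omega> \<notin> C" if "i \<le> k" for i
      proof
        assume "X i \<omega> \<in> C"
        then have "hit X C \<omega> \<le> enat i" by (rule hit_le)
        moreover have "enat i \<le> enat k" using that by simp
        ultimately show False using \<omega>(3) k by (metis order.strict_trans2 order.trans leD)
      qed
      then have "goodl C x (pre X k \<omega>)" unfolding goodl_iff
        using xk by (intro exI[of _ k]) (auto simp: pre_nth)
      then show "\<omega> \<in> (\<Union>n. Gs n)" using \<omega> by (auto simp: Gs_def)
    qed
    have "measure M E \<le> measure M (\<Union>n. Gs n)"
      using EG Gs_sets by (intro finite_measure_mono) auto
    also have "\<dots> \<le> m0 * h x0"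
    proof (rule LIMSEQ_le_const2[OF finite_Lim_measure_incseq[OF Gs_sets Gs_inc]])
      show "\<exists>N. \<forall>n\<ge>N. measure M (Gs n) \<le> m0 * h x0"
        using m0 hp(6) by (auto simp: Gs_meas intro!: mult_left_mono)
    qed
    finally have "measure M E / m0 \<le> h x0" using m0 by (simp add: divide_simps mult.commute)
    then have ch: "c \<le> h x0" using cE by linarith
    define Ts where "Ts t = {\<omega>\<in>space M. X 0 \<omega> = x0 \<and> (\<forall>a\<in>set (pre X t \<omega>). a \<notin> C)}" for t
    have Ts_sets: "Ts t \<in> sets M" for t unfolding Ts_def by (rule pre_sets[OF mc])
    have Ts_meas: "measure M (Ts t) = m0 * sk P C t x0" for t
      unfolding Ts_def m0_def sk_eq by (rule L1[OF mc])
    define I where "I = (\<integral>\<^sup>+\<omega>. ennreal_of_enat (hit X C \<omega>) * indicator {\<omega>\<in>space M. X 0 \<omega> = x0} \<omega> \<partial>M)"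
    have ce: "cond_exp_start M X x0 (\<lambda>\<omega>. ennreal_of_enat (hit X C \<omega>)) = I / ennreal m0"
      unfolding cond_exp_start_def I_def m0_def by (simp add: emeasure_eq_measure)
    have Ibound: "ennreal (m0 * (\<Sum>t<n. sk P C t x0)) \<le> I" for n
    proof -
      have "ennreal (m0 * (\<Sum>t<n. sk P C t x0)) = (\<Sum>t<n. ennreal (measure M (Ts t)))"
        using m0 sk_nonneg[OF st] by (simp add: Ts_meas sum_distrib_left sum_ennreal)
      also have "\<dots> = (\<Sum>t<n. \<integral>\<^sup>+\<omega>. indicator (Ts t) \<omega> \<partial>M)"
        using Ts_sets by (simp add: emeasure_eq_measure)
      also have "\<dots> = (\<integral>\<^sup>+\<omega>. (\<Sum>t<n. indicator (Ts t) \<omega>) \<partial>M)"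
        using Ts_sets by (intro nn_integral_sum[symmetric]) auto
      also have "\<dots> \<le> I" unfolding I_def
      proof (intro nn_integral_mono)
        fix \<omega> assume "\<omega> \<in> space M"
        show "(\<Sum>t<n. indicator (Ts t) \<omega>) \<le> ennreal_of_enat (hit X C \<omega>) * indicator {\<omega>\<in>space M. X 0 \<omega> = x0} \<omega>"
        proof (cases "X 0 \<omega> = x0")
          case False then show ?thesis by (simp add: Ts_def)
        next
          case True
          have "(\<Sum>t<n. indicator (Ts t) \<omega>) \<le> (\<Sum>t<n. if enat t < hit X C \<omega> then 1 else 0 :: ennreal)"
          proof (intro sum_mono)
            fix t
            show "indicator (Ts t) \<omega> \<le> (if enat t < hit X C \<omega> then 1 else 0 :: ennreal)"
            proof (cases "\<omega> \<in> Ts t")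
              case True
              then have "\<forall>i\<le>t. X i \<omega> \<notin> C" by (auto simp: Ts_def pre_def)
              then show ?thesis using hit_less by (simp add: True)
            qed simp
          qed
          also have "\<dots> \<le> ennreal_of_enat (hit X C \<omega>)" by (rule cnt_le)
          finally show ?thesis using True \<open>\<omega> \<in> space M\<close> by simp
        qed
      qed
      finally show ?thesis .
    qed
    show ?thesis
    proof (cases I)
      case top
      then have "cond_exp_start M X x0 (\<lambda>\<omega>. ennreal_of_enat (hit X C \<omega>)) = top"
        using ce by (simp add: ennreal_top_divide)
      then show ?thesis by simp
    next
      case (real r)
      have part: "(\<Sum>t<n. sk P C t x0) \<le> r / m0" for n
      proof -
        have "m0 * (\<Sum>t<n. sk P C t x0) \<le> r" using Ibound[of n] real by (simp add: ennreal_le_iff)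
        then show ?thesis using m0 by (simp add: divide_simps mult.commute)
      qed
      have "summable (\<lambda>t. sk P C t x0)"
      proof (rule bounded_imp_summable[of _ "r / m0"])
        show "\<And>n. 0 \<le> sk P C n x0" by (rule sk_nonneg[OF st])
        fix n show "(\<Sum>k\<le>n. sk P C k x0) \<le> r / m0"
          using part[of "Suc n"] by (simp only: lessThan_Suc_atMost)
      qed
      then have sk0: "(\<lambda>n. sk P C n x0) \<longlonglongrightarrow> 0" by (rule summable_LIMSEQ_zero)
      have "c * G \<le> r / m0"
      proof (rule LIMSEQ_le_const)
        show "(\<lambda>n. r / m0 + G * sk P C n x0) \<longlonglongrightarrow> r / m0"
          using tendsto_add[OF tendsto_const tendsto_mult[OF tendsto_const sk0], of "r/m0" G] by simp
        show "\<exists>N. \<forall>n\<ge>N. c * G \<le> r / m0 + G * sk P C n x0"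
        proof (intro exI allI impI)
          fix n
          have "c * G \<le> h x0 * G" using ch G0 by (intro mult_right_mono)
          also have "\<dots> \<le> (\<Sum>t<n. sk P C t x0) + G * sk P C n x0" using sub[of n] by (simp add: mult.commute)
          also have "\<dots> \<le> r / m0 + G * sk P C n x0" using part[of n] by simp
          finally show "c * G \<le> r / m0 + G * sk P C n x0" .
        qed
      qed
      then have "ennreal (c * G) \<le> ennreal (r / m0)" by (rule ennreal_leI)
      also have "\<dots> = I / ennreal m0" using real m0 by (simp add: divide_ennreal)
      finally show ?thesis using ce by (simp add: G_def \<mu>_def)
    qed
  qed
qed


end
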